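(* Let $S(T)\in\mathbb C[T]$ be a polynomial with constant term $1$, and let $P(T)=1+a_1T+a_2T^2+\cdots$ be its multiplicative inverse in the formal power series ring $\mathbb C[[T]]$. If there exists an integer $r>0$ such that $a_{mr}=0$ for all integers $m\ge1$, then $S(T)=1$. *)

theory Defs
  imports "HOL-Computational_Algebra.Computational_Algebra" Complex_Main
begin

end

theory Submission
  imports Defs "HOL-Analysis.Analysis"
begin

definition sc :: "complex \<Rightarrow> complex fps \<Rightarrow> complex fps" where
  "sc c f = Abs_fps (\<lambda>n. c^n * f$n)"

lemma sc_nth [simp]: "sc c f $ n = c^n * f$n"
  by (simp add: sc_def)

lemma sc_mult: "sc c (f * g) = sc c f * sc c g"
proof (rule fps_ext)
  fix n
  have "sc c (f * g) $ n = (\<Sum>i=0..n. c^n * (f$i * g$(n-i)))"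
    by (simp add: fps_mult_nth sum_distrib_left)
  also have "\<dots> = (\<Sum>i=0..n. (c^i * f$i) * (c^(n-i) * g$(n-i)))"
  proof (rule sum.cong)
    fix i assume "i \<in> {0..n}"
    then have "c^n = c^i * c^(n-i)" by (simp flip: power_add)
    then show "c^n * (f$i * g$(n-i)) = (c^i * f$i) * (c^(n-i) * g$(n-i))"
      by (simp add: mult_ac)
  qed simp
  also have "\<dots> = (sc c f * sc c g) $ n" by (simp add: fps_mult_nth)
  finally show "sc c (f * g) $ n = (sc c f * sc c g) $ n" .
qed

lemma sc_one: "sc c 1 = 1"
  by (rule fps_ext) (simp add: fps_one_nth)

lemma root_sum:
  fixes r n :: nat
  assumes "r > 0"
  defines "z \<equiv> exp (2 * of_real pi * \<i> / of_nat r)"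
  shows "(\<Sum>k<r. (z^k)^n) = (if r dvd n then of_nat r else 0)"
proof -
  have zn: "z^n = exp (2 * of_real pi * \<i> * of_nat n / of_nat r)" for n
    unfolding z_def by (simp flip: exp_of_nat_mult add: field_simps)
  have eq: "z^m = 1 \<longleftrightarrow> r dvd m" for m
    using complex_root_unity_eq_1[where n=r and j=m] assms(1) zn[of m] by simp
  have zr: "(z^n)^r = 1"
  proof -
    have "(z^n)^r = (z^r)^n" by (simp flip: power_mult add: mult.commute)
    also have "z^r = 1" using eq[of r] by simp
    finally show ?thesis by simp
  qed
  have sw: "(\<Sum>k<r. (z^k)^n) = (\<Sum>k<r. (z^n)^k)"
    by (simp flip: power_mult add: mult.commute)
  show ?thesis
  proof (cases "r dvd n")
    case True
    then have "z^n = 1" using eq by simp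
    then show ?thesis using True sw by simp
  next
    case False
    then have "z^n \<noteq> 1" using eq by simp
    then show ?thesis using sw zr False by (simp add: geometric_sum)
  qed
qed

theorem theorem4p13:
  fixes S :: "complex poly" and r :: nat
  assumes "coeff S 0 = 1"
    and "r > 0"
    and "\<And>m. m \<ge> 1 \<Longrightarrow> fps_nth (inverse (fps_of_poly S)) (m * r) = 0"
  shows "S = 1"
proof -
  define z where "z = exp (2 * of_real pi * \<i> / of_nat r)"
  define P where "P = inverse (fps_of_poly S)"
  define Q where "Q = (\<lambda>k::nat. sc (z^k) (fps_of_poly S))"
  define Sk where "Sk = (\<lambda>k::nat. pcompose S [:0, z^k:])"
  have z0: "z \<noteq> 0" unfolding z_def by simp
  have P0: "P $ 0 = 1" using assms(1) by (simp add: P_def)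
  have PS: "P * fps_of_poly S = 1" unfolding P_def
    by (rule inverse_mult_eq_1) (simp add: assms(1))
  have PQ: "sc (z^k) P * Q k = 1" for k
    unfolding Q_def by (simp flip: sc_mult add: PS sc_one)
  have QS: "Q k = fps_of_poly (Sk k)" for k
    unfolding Q_def Sk_def by (rule fps_ext) (simp add: coeff_pcompose_linear)
  have sumP: "(\<Sum>k<r. sc (z^k) P) = fps_const (of_nat r)"
  proof (rule fps_ext)
    fix n
    have "(\<Sum>k<r. sc (z^k) P) $ n = P$n * (\<Sum>k<r. (z^k)^n)"
      by (simp add: fps_sum_nth sum_distrib_left mult.commute)
    also have "\<dots> = P$n * (if r dvd n then of_nat r else 0)"
      using root_sum[OF assms(2)] unfolding z_def by simp
    also have "\<dots> = fps_const (of_nat r) $ n"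
    proof (cases "r dvd n")
      case True
      then obtain m where m: "n = m * r" by (metis dvd_def mult.commute)
      show ?thesis
      proof (cases "m = 0")
        case True then show ?thesis using m P0 by simp
      next
        case False
        then have "P $ n = 0" using assms(3)[of m] m by (simp add: P_def)
        then show ?thesis using True False m assms(2) by simp
      qed
    next
      case False
      then have "n \<noteq> 0" by (metis dvd_0_right)
      then show ?thesis using False by simp
    qed
    finally show "(\<Sum>k<r. sc (z^k) P) $ n = fps_const (of_nat r) $ n" .
  qed
  have fpseq: "(\<Sum>k<r. \<Prod>j\<in>{..<r}-{k}. Q j) = fps_const (of_nat r) * (\<Prod>j<r. Q j)"
  proof -
    have "fps_const (of_nat r) * (\<Prod>j<r. Q j) = (\<Sum>k<r. sc (z^k) P * (\<Prod>j<r. Q j))"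
      by (simp flip: sumP add: sum_distrib_right)
    also have "\<dots> = (\<Sum>k<r. \<Prod>j\<in>{..<r}-{k}. Q j)"
    proof (rule sum.cong)
      fix k assume k: "k \<in> {..<r}"
      have "(\<Prod>j<r. Q j) = Q k * (\<Prod>j\<in>{..<r}-{k}. Q j)"
        using k by (simp add: prod.remove)
      then show "sc (z^k) P * (\<Prod>j<r. Q j) = (\<Prod>j\<in>{..<r}-{k}. Q j)"
        using PQ[of k] by (simp flip: mult.assoc)
    qed simp
    finally show ?thesis by simp
  qed
  have polyeq: "(\<Sum>k<r. \<Prod>j\<in>{..<r}-{k}. Sk j) = smult (of_nat r) (\<Prod>j<r. Sk j)"
    using fpseq unfolding QS
    by (simp flip: fps_of_poly_eq_iff add: fps_of_poly_sum fps_of_poly_prod fps_of_poly_smult)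
  have degSk: "degree (Sk j) = degree S" for j
    unfolding Sk_def using z0 by (simp add: degree_pcompose)
  have Sk0: "Sk j \<noteq> 0" for j
  proof
    assume "Sk j = 0"
    then have "coeff (Sk j) 0 = 0" by simp
    then show False unfolding Sk_def using assms(1) coeff_pcompose_linear[of S "z^j" 0] by simp
  qed
  have "degree (smult (of_nat r :: complex) (\<Prod>j<r. Sk j)) = r * degree S"
    using assms(2) Sk0 by (simp add: degree_prod_eq_sum_degree degSk)
  moreover have "degree (\<Sum>k<r. \<Prod>j\<in>{..<r}-{k}. Sk j) \<le> (r - 1) * degree S"
  proof (rule degree_sum_le)
    fix k assume k: "k \<in> {..<r}"
    have "degree (\<Prod>j\<in>{..<r}-{k}. Sk j) \<le> sum (degree \<circ> Sk) ({..<r}-{k})"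
      by (rule degree_prod_sum_le) simp
    also have "\<dots> = (r - 1) * degree S"
      using k by (simp add: degSk)
    finally show "degree (\<Prod>j\<in>{..<r}-{k}. Sk j) \<le> (r - 1) * degree S" .
  qed simp
  ultimately have "r * degree S \<le> (r - 1) * degree S" using polyeq by simp
  then have "degree S = 0" using assms(2)
  proof -
    have "r * degree S = (r - 1) * degree S + degree S" using assms(2) by (cases r) auto
    then show ?thesis using \<open>r * degree S \<le> (r - 1) * degree S\<close> by linarith
  qed
  then obtain a where "S = pCons a 0" by (rule degree_eq_zeroE)
  then show "S = 1" using assms(1) by (simp add: one_pCons)
qed

end
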